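(* Let $\mathcal H$ be a real Hilbert space, $t_0>0$, let $f:\mathcal H\to\mathbb R$ be a convex function of class $\mathcal C^2(\mathcal H)$ with $S:=\operatorname{argmin}_{\mathcal H} f\neq\emptyset$, and let $e:[t_0,+\infty[\to\mathcal H$ be continuously differentiable. Suppose $\alpha\ge 0$ and $\beta>0$, and let $(x_0,\dot x_0)\in\mathcal H\times\mathcal H$. The following statements are equivalent: 1. $x:[t_0,+\infty[\to\mathcal H$ is a solution trajectory of $$\ddot x(t)+\frac{\alpha}{t}\dot x(t)+\beta\frac{d}{dt}\big(\nabla f(x(t))+e(t)\big)+\nabla f(x(t))+e(t)=0$$ with initial conditions $x(t_0)=x_0$, $\dot x(t_0)=\dot x_0$. 2. $(x,y):[t_0,+\infty[\to\mathcal H\times\mathcal H$ is a solution trajectory of the first-order system $$\begin{cases}\dot x(t)+\beta(\nabla f(x(t))+e(t))-\left(\frac1\beta-\frac\alpha t\right)x(t)+\frac1\beta y(t)=0,\\[2pt] \dot y(t)-\left(\frac1\beta-\frac\alpha t+\frac{\alpha\beta}{t^2}\right)x(t)+\frac1\beta y(t)=0,\end{cases}$$ with initial conditions $x(t_0)=x_0$ and $y(t_0)=-\beta(\dot x_0+\beta\nabla f(x_0))+(1-\beta\alpha/t_0)x_0-\beta^2e(t_0)$.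
   Context: Standing assumption of the paper: $f$ is convex on $\mathcal H$ and its set of minimizers $S$ is nonempty. *)

theory Defs
  imports "HOL-Analysis.Analysis"
begin

definition sol_second_order ::
  "('a::real_normed_vector \<Rightarrow> 'a) \<Rightarrow> (real \<Rightarrow> 'a) \<Rightarrow> real \<Rightarrow> real \<Rightarrow> real \<Rightarrow> 'a \<Rightarrow> 'a
   \<Rightarrow> (real \<Rightarrow> 'a) \<Rightarrow> bool" where
  "sol_second_order gf e \<alpha> \<beta> t0 x0 x1 x \<longleftrightarrow>
     (\<exists>x' x'' g'.
        (\<forall>t\<ge>t0. (x has_vector_derivative x' t) (at t within {t0..})
               \<and> (x' has_vector_derivative x'' t) (at t within {t0..})
               \<and> ((\<lambda>s. gf (x s) + e s) has_vector_derivative g' t) (at t within {t0..})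
               \<and> x'' t + (\<alpha> / t) *\<^sub>R x' t + \<beta> *\<^sub>R g' t + gf (x t) + e t = 0)
      \<and> x t0 = x0 \<and> x' t0 = x1)"

definition sol_first_order ::
  "('a::real_normed_vector \<Rightarrow> 'a) \<Rightarrow> (real \<Rightarrow> 'a) \<Rightarrow> real \<Rightarrow> real \<Rightarrow> real \<Rightarrow> 'a \<Rightarrow> 'a
   \<Rightarrow> (real \<Rightarrow> 'a) \<Rightarrow> (real \<Rightarrow> 'a) \<Rightarrow> bool" where
  "sol_first_order gf e \<alpha> \<beta> t0 x0 x1 x y \<longleftrightarrow>
     (\<exists>x' y'.
        (\<forall>t\<ge>t0. (x has_vector_derivative x' t) (at t within {t0..})
               \<and> (y has_vector_derivative y' t) (at t within {t0..})
               \<and> x' t + \<beta> *\<^sub>R (gf (x t) + e t) - (1/\<beta> - \<alpha>/t) *\<^sub>R x t + (1/\<beta>) *\<^sub>R y t = 0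
               \<and> y' t - (1/\<beta> - \<alpha>/t + \<alpha> * \<beta> / t\<^sup>2) *\<^sub>R x t + (1/\<beta>) *\<^sub>R y t = 0)
      \<and> x t0 = x0
      \<and> y t0 = - \<beta> *\<^sub>R (x1 + \<beta> *\<^sub>R gf x0) + (1 - \<beta> * \<alpha> / t0) *\<^sub>R x0 - \<beta>\<^sup>2 *\<^sub>R e t0)"

end

theory Submission
  imports Defs
begin

lemma inv_deriv:
  assumes "(t::real) > 0"
  shows "((\<lambda>s. c / s) has_real_derivative (- c / t\<^sup>2)) (at t within S)"
  using assms
  by (auto intro!: derivative_eq_intros simp: power2_eq_square field_simps)

lemma const_vd: "((\<lambda>s. c) has_real_derivative 0) (at t within S)"
  by simp

theorem theorem1:
  fixes f :: "'a::{real_inner, complete_space} \<Rightarrow> real"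
    and gf :: "'a \<Rightarrow> 'a"
    and Hf :: "'a \<Rightarrow> ('a \<Rightarrow>\<^sub>L 'a)"
    and e e' :: "real \<Rightarrow> 'a"
    and t0 \<alpha> \<beta> :: real
    and x0 x1 :: 'a
    and x :: "real \<Rightarrow> 'a"
  assumes t0: "t0 > 0"
    and convex: "convex_on UNIV f"
    and argmin: "\<exists>z. \<forall>w. f z \<le> f w"
    and grad: "\<And>u. (f has_derivative (\<lambda>h. gf u \<bullet> h)) (at u)"
    and hess: "\<And>u. (gf has_derivative blinfun_apply (Hf u)) (at u)"
    and hess_cont: "continuous_on UNIV Hf"
    and e_deriv: "\<And>t. t \<ge> t0 \<Longrightarrow> (e has_vector_derivative e' t) (at t within {t0..})"
    and e'_cont: "continuous_on {t0..} e'"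
    and \<alpha>: "\<alpha> \<ge> 0"
    and \<beta>: "\<beta> > 0"
  shows "sol_second_order gf e \<alpha> \<beta> t0 x0 x1 x \<longleftrightarrow>
         (\<exists>y. sol_first_order gf e \<alpha> \<beta> t0 x0 x1 x y)"
proof
  assume "sol_second_order gf e \<alpha> \<beta> t0 x0 x1 x"
  then obtain x' x'' g' where H: "\<And>t. t \<ge> t0 \<Longrightarrow> (x has_vector_derivative x' t) (at t within {t0..})
               \<and> (x' has_vector_derivative x'' t) (at t within {t0..})
               \<and> ((\<lambda>s. gf (x s) + e s) has_vector_derivative g' t) (at t within {t0..})
               \<and> x'' t + (\<alpha> / t) *\<^sub>R x' t + \<beta> *\<^sub>R g' t + gf (x t) + e t = 0"
    and i1: "x t0 = x0" and i2: "x' t0 = x1"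
    unfolding sol_second_order_def by blast
  define y where "y t = (1 - \<alpha>*\<beta>/t) *\<^sub>R x t - \<beta> *\<^sub>R x' t - \<beta>\<^sup>2 *\<^sub>R (gf (x t) + e t)" for t
  define y' where "y' t = (1 - \<alpha>*\<beta>/t) *\<^sub>R x' t + (\<alpha>*\<beta>/t\<^sup>2) *\<^sub>R x t - \<beta> *\<^sub>R x'' t - \<beta>\<^sup>2 *\<^sub>R g' t" for t
  have "sol_first_order gf e \<alpha> \<beta> t0 x0 x1 x y"
    unfolding sol_first_order_def
  proof (rule exI[of _ x'], rule exI[of _ y'], intro conjI allI impI)
    fix t assume t: "t \<ge> t0"
    then have tp: "t > 0" using t0 by simp
    note Ht = H[OF t]
    show "(x has_vector_derivative x' t) (at t within {t0..})" using Ht by blast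
    have d1: "((\<lambda>s. 1 - \<alpha>*\<beta>/s) has_real_derivative (0 - - (\<alpha>*\<beta>) / t\<^sup>2)) (at t within {t0..})"
      by (intro DERIV_diff const_vd inv_deriv tp)
    have "(y has_vector_derivative ((1 - \<alpha>*\<beta>/t) *\<^sub>R x' t + (0 - - (\<alpha>*\<beta>) / t\<^sup>2) *\<^sub>R x t
          - ((\<beta> *\<^sub>R x'' t + 0 *\<^sub>R x' t)) - (\<beta>\<^sup>2 *\<^sub>R g' t + 0 *\<^sub>R (gf (x t) + e t)))) (at t within {t0..})"
      unfolding y_def
      by (intro has_vector_derivative_diff has_vector_derivative_scaleR d1 const_vd) (use Ht in blast)+
    then show "(y has_vector_derivative y' t) (at t within {t0..})"
      by (simp add: y'_def)
    have eq: "x'' t + (\<alpha> / t) *\<^sub>R x' t + \<beta> *\<^sub>R g' t + gf (x t) + e t = 0" using Ht by blast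
    show "x' t + \<beta> *\<^sub>R (gf (x t) + e t) - (1/\<beta> - \<alpha>/t) *\<^sub>R x t + (1/\<beta>) *\<^sub>R y t = 0"
      using \<beta> tp by (simp add: y_def algebra_simps power2_eq_square)
    show "y' t - (1/\<beta> - \<alpha>/t + \<alpha> * \<beta> / t\<^sup>2) *\<^sub>R x t + (1/\<beta>) *\<^sub>R y t = 0"
    proof -
      have "y' t - (1/\<beta> - \<alpha>/t + \<alpha> * \<beta> / t\<^sup>2) *\<^sub>R x t + (1/\<beta>) *\<^sub>R y t
          = - \<beta> *\<^sub>R (x'' t + (\<alpha> / t) *\<^sub>R x' t + \<beta> *\<^sub>R g' t + gf (x t) + e t)"
        using \<beta> tp by (simp add: y_def y'_def algebra_simps power2_eq_square)
      then show ?thesis using eq by simp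
    qed
  next
    show "x t0 = x0" by (rule i1)
    show "y t0 = - \<beta> *\<^sub>R (x1 + \<beta> *\<^sub>R gf x0) + (1 - \<beta> * \<alpha> / t0) *\<^sub>R x0 - \<beta>\<^sup>2 *\<^sub>R e t0"
      by (simp add: y_def i1 i2 algebra_simps power2_eq_square)
  qed
  then show "\<exists>y. sol_first_order gf e \<alpha> \<beta> t0 x0 x1 x y" by blast
next
  assume "\<exists>y. sol_first_order gf e \<alpha> \<beta> t0 x0 x1 x y"
  then obtain y x' y' where H: "\<And>t. t \<ge> t0 \<Longrightarrow> (x has_vector_derivative x' t) (at t within {t0..})
               \<and> (y has_vector_derivative y' t) (at t within {t0..})
               \<and> x' t + \<beta> *\<^sub>R (gf (x t) + e t) - (1/\<beta> - \<alpha>/t) *\<^sub>R x t + (1/\<beta>) *\<^sub>R y t = 0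
               \<and> y' t - (1/\<beta> - \<alpha>/t + \<alpha> * \<beta> / t\<^sup>2) *\<^sub>R x t + (1/\<beta>) *\<^sub>R y t = 0"
    and i1: "x t0 = x0"
    and i2: "y t0 = - \<beta> *\<^sub>R (x1 + \<beta> *\<^sub>R gf x0) + (1 - \<beta> * \<alpha> / t0) *\<^sub>R x0 - \<beta>\<^sup>2 *\<^sub>R e t0"
    unfolding sol_first_order_def by blast
  define xp where "xp t = (1/\<beta> - \<alpha>/t) *\<^sub>R x t - (1/\<beta>) *\<^sub>R y t - \<beta> *\<^sub>R (gf (x t) + e t)" for t
  define g' where "g' t = blinfun_apply (Hf (x t)) (xp t) + e' t" for t
  define xpp where "xpp t = (1/\<beta> - \<alpha>/t) *\<^sub>R xp t + (0 - - \<alpha> / t\<^sup>2) *\<^sub>R x t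
          - ((1/\<beta>) *\<^sub>R y' t + 0 *\<^sub>R y t) - (\<beta> *\<^sub>R g' t + 0 *\<^sub>R (gf (x t) + e t))" for t
  show "sol_second_order gf e \<alpha> \<beta> t0 x0 x1 x"
    unfolding sol_second_order_def
  proof (rule exI[of _ xp], rule exI[of _ xpp], rule exI[of _ g'], intro conjI allI impI)
    fix t assume t: "t \<ge> t0"
    then have tp: "t > 0" using t0 by simp
    note Ht = H[OF t]
    have eq1: "x' t + \<beta> *\<^sub>R (gf (x t) + e t) - (1/\<beta> - \<alpha>/t) *\<^sub>R x t + (1/\<beta>) *\<^sub>R y t = 0"
      using Ht by blast
    have eq2: "y' t - (1/\<beta> - \<alpha>/t + \<alpha> * \<beta> / t\<^sup>2) *\<^sub>R x t + (1/\<beta>) *\<^sub>R y t = 0"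
      using Ht by blast
    have xpeq: "x' t = xp t"
    proof -
      have "x' t = (x' t + \<beta> *\<^sub>R (gf (x t) + e t) - (1/\<beta> - \<alpha>/t) *\<^sub>R x t + (1/\<beta>) *\<^sub>R y t)
         + xp t" by (simp add: xp_def algebra_simps)
      then show ?thesis using eq1 by simp
    qed
    have y'eq: "y' t = (1/\<beta> - \<alpha>/t + \<alpha> * \<beta> / t\<^sup>2) *\<^sub>R x t - (1/\<beta>) *\<^sub>R y t"
    proof -
      have "y' t = (y' t - (1/\<beta> - \<alpha>/t + \<alpha> * \<beta> / t\<^sup>2) *\<^sub>R x t + (1/\<beta>) *\<^sub>R y t)
         + ((1/\<beta> - \<alpha>/t + \<alpha> * \<beta> / t\<^sup>2) *\<^sub>R x t - (1/\<beta>) *\<^sub>R y t)" by (simp add: algebra_simps)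
      then show ?thesis using eq2 by simp
    qed
    have dx: "(x has_vector_derivative xp t) (at t within {t0..})"
      using Ht xpeq by metis
    then show "(x has_vector_derivative xp t) (at t within {t0..})" .
    have dy: "(y has_vector_derivative y' t) (at t within {t0..})" using Ht by blast
    have dgx: "((gf \<circ> x) has_vector_derivative blinfun_apply (Hf (x t)) (xp t)) (at t within {t0..})"
      by (rule vector_derivative_diff_chain_within[OF dx has_derivative_at_withinI[OF hess]])
    have dg: "((\<lambda>s. gf (x s) + e s) has_vector_derivative g' t) (at t within {t0..})"
      unfolding g'_def using has_vector_derivative_add[OF dgx e_deriv[OF t]] by (simp add: o_def)
    then show "((\<lambda>s. gf (x s) + e s) has_vector_derivative g' t) (at t within {t0..})" .
    have d1: "((\<lambda>s. 1/\<beta> - \<alpha>/s) has_real_derivative (0 - - \<alpha> / t\<^sup>2)) (at t within {t0..})"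
      by (intro DERIV_diff const_vd inv_deriv tp)
    show "(xp has_vector_derivative xpp t) (at t within {t0..})"
      unfolding xp_def[abs_def] xpp_def
      by (intro has_vector_derivative_diff has_vector_derivative_scaleR d1 const_vd dx[unfolded xp_def] dy dg)
    show "xpp t + (\<alpha> / t) *\<^sub>R xp t + \<beta> *\<^sub>R g' t + gf (x t) + e t = 0"
    proof -
      have s1: "xpp t + (\<alpha> / t) *\<^sub>R xp t + \<beta> *\<^sub>R g' t + gf (x t) + e t
          = (1/\<beta>) *\<^sub>R xp t + (\<alpha>/t\<^sup>2) *\<^sub>R x t - (1/\<beta>) *\<^sub>R y' t + (gf (x t) + e t)"
        by (simp add: xpp_def algebra_simps)
      have s2: "(1/\<beta>) *\<^sub>R xp t = ((1/\<beta>)*(1/\<beta> - \<alpha>/t)) *\<^sub>R x t - (1/\<beta>*(1/\<beta>)) *\<^sub>R y t - (gf (x t) + e t)"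
        using \<beta> by (simp add: xp_def algebra_simps)
      have s3: "(1/\<beta>) *\<^sub>R y' t = ((1/\<beta>)*(1/\<beta> - \<alpha>/t + \<alpha> * \<beta> / t\<^sup>2)) *\<^sub>R x t - (1/\<beta>*(1/\<beta>)) *\<^sub>R y t"
        by (simp add: y'eq algebra_simps)
      have s4: "(1/\<beta>) *\<^sub>R xp t + (\<alpha>/t\<^sup>2) *\<^sub>R x t - (1/\<beta>) *\<^sub>R y' t + (gf (x t) + e t)
          = ((1/\<beta>)*(1/\<beta> - \<alpha>/t) + \<alpha>/t\<^sup>2 - (1/\<beta>)*(1/\<beta> - \<alpha>/t + \<alpha> * \<beta> / t\<^sup>2)) *\<^sub>R x t"
        unfolding s2 s3 by (simp add: algebra_simps)
      have s5: "(1/\<beta>)*(1/\<beta> - \<alpha>/t) + \<alpha>/t\<^sup>2 - (1/\<beta>)*(1/\<beta> - \<alpha>/t + \<alpha> * \<beta> / t\<^sup>2) = 0"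
        using \<beta> tp by (simp add: field_simps)
      show ?thesis using s1 s4 s5 by simp
    qed
  next
    show "x t0 = x0" by (rule i1)
    show "xp t0 = x1"
      using \<beta> t0 by (simp add: xp_def i1 i2 algebra_simps power2_eq_square field_simps)
  qed
qed

end
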